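(* Let $M$ be a connected smooth Riemannian manifold. Let $\omega\in W(\hat M)$ be such that, if $\alpha_M(\omega)<\infty$, then $\omega(t)=\infty_M$ for all $t\ge\alpha_M(\omega)$. Let $\Omega\subset M$ be open and let $\Omega_n\subset\Omega$, $n\in\mathbb N$, be open with $\Omega_n\subset\Omega_{n+1}$, $\omega(0)\in\Omega_1$ and $\bigcup_n\Omega_n=\Omega$. (a) $\alpha_{\Omega_n}(\omega)\nearrow\alpha_\Omega(\omega)$ as $n\to\infty$. (b) If in addition for each $n$ there is an open $\Upsilon_n\subset M$ with $\Upsilon_n\cap\Omega=\Omega_n$ and $\overline\Omega=\bigcup_n(\overline\Omega\cap\Upsilon_n)$, then $\beta_{\Omega_n}(\omega)\nearrow\beta_\Omega(\omega)$ as $n\to\infty$.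
   Context: $\hat M=M\cup\{\infty_M\}$ is the one-point compactification if $M$ is noncompact, $\hat M=M$ if compact; $W(\hat M)$ is the space of continuous paths $[0,\infty)\to\hat M$, and $\mathbb X_t(\omega)=\omega(t)$. For $U\subset\hat M$ open: $\alpha_U(\omega)=\inf\{t>0:\omega(t)\in\hat M\setminus U\}$ and $\beta_U(\omega)=\inf\{t>0:\int_0^t1_{\hat M\setminus U}(\omega(s))ds>0\}$, with $\inf\emptyset=\infty$. Closures $\overline\Omega$ are taken in $M$. *)

theory Defs
  imports "HOL-Analysis.Analysis"
begin

definition topological_manifold :: "'a topology \<Rightarrow> nat \<Rightarrow> bool" where
  "topological_manifold X n \<longleftrightarrow>
     Hausdorff_space X \<and> second_countable X \<and>
     (\<forall>x\<in>topspace X. \<exists>U V. openin X U \<and> x \<in> U \<and> openin (Euclidean_space n) V \<and>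
        (subtopology X U) homeomorphic_space (subtopology (Euclidean_space n) V))"

text \<open>One-point compactification: points of M are Some x, the point at infinity is None.
  If X is compact, the compactification is X itself (no point None).\<close>
definition opc :: "'a topology \<Rightarrow> 'a option topology" where
  "opc X = topology (\<lambda>V.
     (if compact_space X then V \<subseteq> Some ` topspace X \<and> openin X (Some -` V)
      else openin X (Some -` V) \<and>
           (None \<in> V \<longrightarrow> compactin X (topspace X - Some -` V) \<and> closedin X (topspace X - Some -` V))))"

definition path_space :: "'b topology \<Rightarrow> (real \<Rightarrow> 'b) set" where
  "path_space Y = {w. continuous_map (subtopology euclideanreal {0..}) Y w}"

definition alpha_time :: "'b topology \<Rightarrow> 'b set \<Rightarrow> (real \<Rightarrow> 'b) \<Rightarrow> ereal" where
  "alpha_time Y U w = Inf (ereal ` {t. t > 0 \<and> w t \<in> topspace Y - U})"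

definition beta_time :: "'b topology \<Rightarrow> 'b set \<Rightarrow> (real \<Rightarrow> 'b) \<Rightarrow> ereal" where
  "beta_time Y U w = Inf (ereal ` {t. t > 0 \<and>
      integral {0..t} (\<lambda>s. indicator (topspace Y - U) (w s) :: real) > 0})"

end

theory Submission
  imports Defs
begin


lemma opc_istop: "istopology (\<lambda>V.
     (if compact_space X then V \<subseteq> Some ` topspace X \<and> openin X (Some -` V)
      else openin X (Some -` V) \<and>
           (None \<in> V \<longrightarrow> compactin X (topspace X - Some -` V) \<and> closedin X (topspace X - Some -` V))))"
proof (cases "compact_space X")
  case True
  then show ?thesis unfolding istopology_def
    by (auto simp: vimage_Int vimage_Union intro!: openin_Union)
next
  case False
  show ?thesis unfolding istopology_def
  proof (intro conjI allI impI)
    fix S T assume S: "(if compact_space X then S \<subseteq> Some ` topspace X \<and> openin X (Some -` S)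
      else openin X (Some -` S) \<and>
           (None \<in> S \<longrightarrow> compactin X (topspace X - Some -` S) \<and> closedin X (topspace X - Some -` S)))"
      and T: "(if compact_space X then T \<subseteq> Some ` topspace X \<and> openin X (Some -` T)
      else openin X (Some -` T) \<and>
           (None \<in> T \<longrightarrow> compactin X (topspace X - Some -` T) \<and> closedin X (topspace X - Some -` T)))"
    have e: "topspace X - Some -` (S \<inter> T) = (topspace X - Some -` S) \<union> (topspace X - Some -` T)" by auto
    show "(if compact_space X then S \<inter> T \<subseteq> Some ` topspace X \<and> openin X (Some -` (S \<inter> T))
      else openin X (Some -` (S \<inter> T)) \<and>
           (None \<in> S \<inter> T \<longrightarrow> compactin X (topspace X - Some -` (S \<inter> T)) \<and> closedin X (topspace X - Some -` (S \<inter> T))))"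
      using S T False unfolding e by (auto simp: vimage_Int intro: compactin_Un closedin_Un)
  next
    fix K assume K: "\<forall>S\<in>K. (if compact_space X then S \<subseteq> Some ` topspace X \<and> openin X (Some -` S)
      else openin X (Some -` S) \<and>
           (None \<in> S \<longrightarrow> compactin X (topspace X - Some -` S) \<and> closedin X (topspace X - Some -` S)))"
    have o: "openin X (Some -` \<Union>K)" using K False by (auto simp: vimage_Union intro!: openin_Union)
    moreover have "compactin X (topspace X - Some -` \<Union>K) \<and> closedin X (topspace X - Some -` \<Union>K)" if nK: "None \<in> \<Union>K"
    proof -
      obtain S where S: "S \<in> K" "None \<in> S" using nK by auto
      have c: "compactin X (topspace X - Some -` S)" using K S False by auto
      have cl: "closedin X (topspace X - Some -` \<Union>K)" using o by blast
      have "topspace X - Some -` \<Union>K \<subseteq> topspace X - Some -` S" using S by auto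
      then show ?thesis using c cl closed_compactin by blast
    qed
    ultimately show "(if compact_space X then \<Union>K \<subseteq> Some ` topspace X \<and> openin X (Some -` \<Union>K)
      else openin X (Some -` \<Union>K) \<and>
           (None \<in> \<Union>K \<longrightarrow> compactin X (topspace X - Some -` \<Union>K) \<and> closedin X (topspace X - Some -` \<Union>K)))"
      using False by auto
  qed
qed

lemma openin_opc: "openin (opc X) V \<longleftrightarrow> (if compact_space X then V \<subseteq> Some ` topspace X \<and> openin X (Some -` V)
      else openin X (Some -` V) \<and>
           (None \<in> V \<longrightarrow> compactin X (topspace X - Some -` V) \<and> closedin X (topspace X - Some -` V)))"
  unfolding opc_def using opc_istop[of X] by simp

lemma openin_opc_Some: "openin X U \<Longrightarrow> openin (opc X) (Some ` U)"
  unfolding openin_opc using openin_subset[of X U] by (auto simp: inj_vimage_image_eq)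

lemma topspace_opc: "topspace (opc X) \<subseteq> insert None (Some ` topspace X)"
proof
  fix z assume "z \<in> topspace (opc X)"
  then obtain V where V: "openin (opc X) V" "z \<in> V" by (metis openin_topspace)
  have "openin X (Some -` V)" using V(1) unfolding openin_opc by (auto split: if_splits)
  then have "Some -` V \<subseteq> topspace X" by (rule openin_subset)
  then show "z \<in> insert None (Some ` topspace X)" using V(2) by (cases z) auto
qed

lemma some_top_opc: "Some ` topspace X \<subseteq> topspace (opc X)"
  using openin_opc_Some[of X "topspace X"] openin_subset by auto



lemma compact_incr_cover:
  assumes K: "compactin Y K" and V: "\<And>n. openin Y (V n)" and mono: "\<And>n. V n \<subseteq> V (Suc n)"
    and cov: "K \<subseteq> (\<Union>n. V n)"
  shows "\<exists>N. K \<subseteq> V N"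
proof -
  obtain F where F: "finite F" "F \<subseteq> range V" "K \<subseteq> \<Union>F"
    using K cov V unfolding compactin_def by (metis (no_types, lifting) imageE)
  obtain I where I: "finite I" "F = V ` I" using F(1,2) by (meson finite_subset_image)
  define N where "N = Max (insert 0 I)"
  have "\<Union>F \<subseteq> V N"
  proof
    fix x assume "x \<in> \<Union>F"
    then obtain i where i: "i \<in> I" "x \<in> V i" using I by auto
    have "i \<le> N" using I(1) i(1) unfolding N_def by simp
    then have "V i \<subseteq> V N" using lift_Suc_mono_le[of V, OF mono] by blast
    then show "x \<in> V N" using i by auto
  qed
  then show ?thesis using F(3) by blast
qed

lemma path_compact: "w \<in> path_space Y \<Longrightarrow> compactin Y (w ` {0..T})"
proof -
  assume "w \<in> path_space Y"
  then have c: "continuous_map (subtopology euclideanreal {0..}) Y w" unfolding path_space_def by simp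
  have "compactin (subtopology euclideanreal {0..}) {0..T}"
    unfolding compactin_subtopology compactin_euclidean_iff by (simp add: subset_eq)
  then show ?thesis using c by (rule image_compactin)
qed

lemma path_integrable:
  assumes w: "w \<in> path_space Y" and U: "openin Y U"
  shows "(\<lambda>s. indicator (topspace Y - U) (w s) :: real) integrable_on {0..t}"
proof -
  have c: "continuous_map (subtopology euclideanreal {0..}) Y w" using w unfolding path_space_def by simp
  have "closedin Y (topspace Y - U)" using U by (simp add: closedin_diff)
  then have "closedin (subtopology euclideanreal {0..}) {s \<in> topspace (subtopology euclideanreal {0..}). w s \<in> topspace Y - U}"
    by (rule closedin_continuous_map_preimage[OF c])
  then have cl0: "closedin (subtopology euclideanreal {0..}) {s \<in> {0..}. w s \<in> topspace Y - U}"
    by simp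
  have cl: "closed {s \<in> {0..}. w s \<in> topspace Y - U}"
    using closedin_closed_trans[OF cl0] by simp
  define S where "S = {0..t} \<inter> {s \<in> {0..}. w s \<in> topspace Y - U}"
  have "compact S" unfolding S_def using compact_Int_closed[OF compact_Icc cl] .
  then have "S \<in> lmeasurable" using lmeasurable_compact by blast
  then have "indicat_real S integrable_on UNIV" using lmeasurable_iff_indicator_has_integral[of S "measure lebesgue S"] by (auto simp: integrable_on_def)
  then have "indicat_real S integrable_on {0..t}" by (rule integrable_on_subinterval) auto
  then show ?thesis by (rule integrable_eq) (auto simp: S_def indicator_def)
qed


lemma alpha_ge:
  assumes "\<And>t. t > 0 \<Longrightarrow> w t \<in> topspace Y - U \<Longrightarrow> T \<le> t"
  shows "ereal T \<le> alpha_time Y U w"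
  unfolding alpha_time_def using assms by (auto intro!: Inf_greatest)

lemma alpha_le:
  assumes "t > 0" "w t \<in> topspace Y - U"
  shows "alpha_time Y U w \<le> ereal t"
  unfolding alpha_time_def using assms by (auto intro!: Inf_lower)

lemma alpha_nonneg: "0 \<le> alpha_time Y U w"
  using alpha_ge[of w Y U 0] by (simp add: zero_ereal_def)

lemma alpha_mono: "U \<subseteq> V \<Longrightarrow> alpha_time Y U w \<le> alpha_time Y V w"
  unfolding alpha_time_def by (rule Inf_superset_mono) auto

lemma beta_ge:
  assumes "\<And>t. t > 0 \<Longrightarrow> integral {0..t} (\<lambda>s. indicator (topspace Y - U) (w s) :: real) > 0 \<Longrightarrow> T \<le> t"
  shows "ereal T \<le> beta_time Y U w"
  unfolding beta_time_def using assms by (auto intro!: Inf_greatest)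

lemma beta_le:
  assumes "t > 0" "integral {0..t} (\<lambda>s. indicator (topspace Y - U) (w s) :: real) > 0"
  shows "beta_time Y U w \<le> ereal t"
  unfolding beta_time_def using assms by (auto intro!: Inf_lower)

lemma beta_nonneg: "0 \<le> beta_time Y U w"
  using beta_ge[of Y U w 0] by (simp add: zero_ereal_def)

lemma beta_mono:
  assumes w: "w \<in> path_space Y" and U: "openin Y U" and V: "openin Y V" and UV: "U \<subseteq> V"
  shows "beta_time Y U w \<le> beta_time Y V w"
  unfolding beta_time_def
proof (rule Inf_superset_mono, clarify)
  fix t assume t: "t > 0" "0 < integral {0..t} (\<lambda>s. indicator (topspace Y - V) (w s) :: real)"
  have "integral {0..t} (\<lambda>s. indicator (topspace Y - V) (w s) :: real)
      \<le> integral {0..t} (\<lambda>s. indicator (topspace Y - U) (w s) :: real)"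
    using path_integrable[OF w U] path_integrable[OF w V] UV
    by (intro integral_le) (auto simp: indicator_def)
  then show "ereal t \<in> ereal ` {t. 0 < t \<and> 0 < integral {0..t} (\<lambda>s. indicator (topspace Y - U) (w s) :: real)}"
    using t by auto
qed

lemma conv_lemma:
  fixes f :: "nat \<Rightarrow> ereal"
  assumes inc: "incseq f" and le: "\<And>n. f n \<le> L" and gt: "\<And>T. ereal T < L \<Longrightarrow> \<exists>N. ereal T \<le> f N"
  shows "f \<longlonglongrightarrow> L"
proof -
  have lim: "f \<longlonglongrightarrow> (SUP n. f n)" using inc by (rule LIMSEQ_SUP)
  have "(SUP n. f n) = L"
  proof (rule antisym)
    show "(SUP n. f n) \<le> L" using le by (rule SUP_least)
    show "L \<le> (SUP n. f n)"
    proof (rule ccontr)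
      assume "\<not> L \<le> (SUP n. f n)"
      then have "(SUP n. f n) < L" by simp
      then obtain T where T: "(SUP n. f n) < ereal T" "ereal T < L" using ereal_dense2 by blast
      obtain N where "ereal T \<le> f N" using gt[OF T(2)] by blast
      moreover have "f N \<le> (SUP n. f n)" by (rule SUP_upper) simp
      ultimately show False using T(1) by simp
    qed
  qed
  then show ?thesis using lim by simp
qed

lemma path_top:
  assumes "w \<in> path_space Y" "s \<ge> 0" shows "w s \<in> topspace Y"
  using assms unfolding path_space_def continuous_map_def by auto

lemma pos_integral:
  assumes w: "w \<in> path_space Y" and U: "openin Y U" and ab: "0 \<le> a" "a < b" "b \<le> T2"
    and out: "\<And>r. r \<in> {a..b} \<Longrightarrow> w r \<in> topspace Y - U"
  shows "integral {0..T2} (\<lambda>s. indicator (topspace Y - U) (w s) :: real) > 0"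
proof -
  let ?f = "\<lambda>s. indicator (topspace Y - U) (w s) :: real"
  have "integral {a..b} ?f = integral {a..b} (\<lambda>s. 1::real)"
    using out by (intro integral_cong) (auto simp: indicator_def)
  also have "\<dots> = b - a" using ab by simp
  finally have e: "integral {a..b} ?f = b - a" .
  have "integral {a..b} ?f \<le> integral {0..T2} ?f"
    using path_integrable[OF w U] ab
    by (intro integral_subset_le) (auto intro: integrable_on_subinterval[OF path_integrable[OF w U, of T2]])
  then show ?thesis using e ab by simp
qed

theorem mainTheorem4:
  fixes X :: "'a topology" and d :: nat and w :: "real \<Rightarrow> 'a option"
    and \<Omega> :: "'a set" and \<Omega>s :: "nat \<Rightarrow> 'a set"
  assumes manifold: "topological_manifold X d" and conn: "connected_space X"
    and w_path: "w \<in> path_space (opc X)"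
    and w_absorb: "alpha_time (opc X) (Some ` topspace X) w < \<infinity> \<Longrightarrow>
        (\<forall>t\<ge>0. ereal t \<ge> alpha_time (opc X) (Some ` topspace X) w \<longrightarrow> w t = None)"
    and \<Omega>_open: "openin X \<Omega>"
    and \<Omega>s_open: "\<And>n. openin X (\<Omega>s n)"
    and \<Omega>s_sub: "\<And>n. \<Omega>s n \<subseteq> \<Omega>"
    and \<Omega>s_mono: "\<And>n. \<Omega>s n \<subseteq> \<Omega>s (Suc n)"
    and start: "w 0 \<in> Some ` \<Omega>s 0"
    and \<Omega>s_union: "(\<Union>n. \<Omega>s n) = \<Omega>"
  shows "(incseq (\<lambda>n. alpha_time (opc X) (Some ` \<Omega>s n) w) \<and>
         (\<lambda>n. alpha_time (opc X) (Some ` \<Omega>s n) w) \<longlonglongrightarrow> alpha_time (opc X) (Some ` \<Omega>) w) \<and>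
         ((\<exists>\<Upsilon> :: nat \<Rightarrow> 'a set. (\<forall>n. openin X (\<Upsilon> n) \<and> \<Upsilon> n \<inter> \<Omega> = \<Omega>s n) \<and>
             X closure_of \<Omega> = (\<Union>n. X closure_of \<Omega> \<inter> \<Upsilon> n)) \<longrightarrow>
         incseq (\<lambda>n. beta_time (opc X) (Some ` \<Omega>s n) w) \<and>
         (\<lambda>n. beta_time (opc X) (Some ` \<Omega>s n) w) \<longlonglongrightarrow> beta_time (opc X) (Some ` \<Omega>) w)"
proof -
  define Y where "Y = opc X"
  have wp: "w \<in> path_space Y" using w_path by (simp add: Y_def)
  have Vopen: "\<And>n. openin Y (Some ` \<Omega>s n)" unfolding Y_def by (rule openin_opc_Some[OF \<Omega>s_open])
  have Oopen: "openin Y (Some ` \<Omega>)" unfolding Y_def by (rule openin_opc_Some[OF \<Omega>_open])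
  have Vmono: "\<And>n. Some ` \<Omega>s n \<subseteq> Some ` \<Omega>s (Suc n)" using \<Omega>s_mono by (simp add: image_mono)
  have incS: "mono \<Omega>s" using \<Omega>s_mono by (simp add: mono_iff_le_Suc)
  have wtop: "\<And>s. s \<ge> 0 \<Longrightarrow> w s \<in> topspace Y" using path_top[OF wp] .
  have w0: "w 0 \<in> Some ` \<Omega>" using start \<Omega>s_sub by blast
  have incA: "incseq (\<lambda>n. alpha_time Y (Some ` \<Omega>s n) w)"
    by (rule incseq_SucI, rule alpha_mono, rule Vmono)
  have A: "(\<lambda>n. alpha_time Y (Some ` \<Omega>s n) w) \<longlonglongrightarrow> alpha_time Y (Some ` \<Omega>) w"
  proof (rule conv_lemma[OF incA])
    show "\<And>n. alpha_time Y (Some ` \<Omega>s n) w \<le> alpha_time Y (Some ` \<Omega>) w"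
      using \<Omega>s_sub by (intro alpha_mono image_mono)
    fix T assume T: "ereal T < alpha_time Y (Some ` \<Omega>) w"
    show "\<exists>N. ereal T \<le> alpha_time Y (Some ` \<Omega>s N) w"
    proof (cases "T \<le> 0")
      case True
      then have "ereal T \<le> 0" by (simp add: zero_ereal_def)
      then show ?thesis by (intro exI[of _ 0] order_trans[OF _ alpha_nonneg])
    next
      case False
      have sub: "w ` {0..T} \<subseteq> (\<Union>n. Some ` \<Omega>s n)"
      proof
        fix z assume "z \<in> w ` {0..T}"
        then obtain s where s: "s \<in> {0..T}" "z = w s" by auto
        have "w s \<in> Some ` \<Omega>"
        proof (cases "s = 0")
          case True then show ?thesis using w0 by simp
        next
          case False
          then have sp: "s > 0" using s by auto
          show ?thesis
          proof (rule ccontr)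
            assume nw: "w s \<notin> Some ` \<Omega>"
            have "w s \<in> topspace Y" using wtop[of s] sp by simp
            then have "w s \<in> topspace Y - Some ` \<Omega>" using nw by (rule DiffI)
            then have a1: "alpha_time Y (Some ` \<Omega>) w \<le> ereal s" by (rule alpha_le[OF sp])
            have "ereal s \<le> ereal T" using s by simp
            then show False using a1 T by (meson leD order_trans)
          qed
        qed
        then show "z \<in> (\<Union>n. Some ` \<Omega>s n)" using s \<Omega>s_union by auto
      qed
      obtain N where N: "w ` {0..T} \<subseteq> Some ` \<Omega>s N"
        using compact_incr_cover[OF path_compact[OF wp] Vopen Vmono sub] by blast
      have "ereal T \<le> alpha_time Y (Some ` \<Omega>s N) w"
      proof (rule alpha_ge)
        fix t assume t: "t > 0" "w t \<in> topspace Y - Some ` \<Omega>s N"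
        show "T \<le> t"
        proof (rule ccontr)
          assume "\<not> T \<le> t"
          then have "t \<in> {0..T}" using t by auto
          then show False using N t by blast
        qed
      qed
      then show ?thesis by blast
    qed
  qed
  have B: "incseq (\<lambda>n. beta_time Y (Some ` \<Omega>s n) w) \<and>
         (\<lambda>n. beta_time Y (Some ` \<Omega>s n) w) \<longlonglongrightarrow> beta_time Y (Some ` \<Omega>) w"
    if Ups: "\<forall>n. openin X (\<Upsilon> n) \<and> \<Upsilon> n \<inter> \<Omega> = \<Omega>s n"
      and clos: "X closure_of \<Omega> = (\<Union>n. X closure_of \<Omega> \<inter> \<Upsilon> n)" for \<Upsilon>
  proof -
    define U' where "U' n = (\<Union>k\<le>n. \<Upsilon> k)" for n
    have U'open: "openin X (U' n)" for n unfolding U'_def using Ups by (intro openin_Union) auto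
    have U'mono: "U' n \<subseteq> U' (Suc n)" for n unfolding U'_def by (auto simp: atMost_Suc)
    have U'int: "U' n \<inter> \<Omega> = \<Omega>s n" for n
    proof -
      have "U' n \<inter> \<Omega> = (\<Union>k\<le>n. \<Upsilon> k \<inter> \<Omega>)" unfolding U'_def by auto
      also have "\<dots> = (\<Union>k\<le>n. \<Omega>s k)" using Ups by simp
      also have "\<dots> = \<Omega>s n" using incS by (auto simp: mono_def)
      finally show ?thesis .
    qed
    have clU: "X closure_of \<Omega> \<subseteq> (\<Union>n. U' n)" unfolding U'_def
      using clos by blast
    have incB: "incseq (\<lambda>n. beta_time Y (Some ` \<Omega>s n) w)"
      by (rule incseq_SucI, rule beta_mono[OF wp Vopen Vopen Vmono])
    have lim: "(\<lambda>n. beta_time Y (Some ` \<Omega>s n) w) \<longlonglongrightarrow> beta_time Y (Some ` \<Omega>) w"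
    proof (rule conv_lemma[OF incB])
      show "\<And>n. beta_time Y (Some ` \<Omega>s n) w \<le> beta_time Y (Some ` \<Omega>) w"
        using \<Omega>s_sub by (intro beta_mono[OF wp Vopen Oopen] image_mono)
      fix T assume T: "ereal T < beta_time Y (Some ` \<Omega>) w"
      show "\<exists>N. ereal T \<le> beta_time Y (Some ` \<Omega>s N) w"
      proof (cases "T \<le> 0")
        case True
        then have "ereal T \<le> 0" by (simp add: zero_ereal_def)
        then show ?thesis by (intro exI[of _ 0] order_trans[OF _ beta_nonneg])
      next
        case False
        then have Tpos: "T > 0" by simp
        obtain T2 where T2: "ereal T < ereal T2" "ereal T2 < beta_time Y (Some ` \<Omega>) w"
          using ereal_dense2[OF T] by blast
        have TT2: "T < T2" using T2(1) by simp
        let ?f = "\<lambda>s. indicator (topspace Y - Some ` \<Omega>) (w s) :: real"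
        have I0: "integral {0..T2} ?f \<le> 0"
        proof (rule ccontr)
          assume "\<not> integral {0..T2} ?f \<le> 0"
          then have "beta_time Y (Some ` \<Omega>) w \<le> ereal T2"
            using TT2 Tpos by (intro beta_le) auto
          then show False using T2(2) by simp
        qed
        have incl: "w s \<in> Some ` (X closure_of \<Omega>)" if s: "s \<in> {0..T}" for s
        proof (rule ccontr)
          assume nin: "w s \<notin> Some ` (X closure_of \<Omega>)"
          have ws: "w s \<in> topspace Y" using wtop s by auto
          obtain a b where ab: "0 \<le> a" "a < b" "b \<le> T2"
            and out: "\<And>r. r \<in> {a..b} \<Longrightarrow> w r \<in> topspace Y - Some ` \<Omega>"
          proof (cases "w s")
            case None
            have "s \<noteq> 0" using start None by auto
            then have sp: "s > 0" using s by auto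
            have "None \<in> topspace Y - Some ` topspace X" using ws None by auto
            then have al: "alpha_time Y (Some ` topspace X) w \<le> ereal s"
              using alpha_le[OF sp] None by metis
            then have "alpha_time (opc X) (Some ` topspace X) w < \<infinity>" unfolding Y_def by (rule le_less_trans) simp
            then have abs: "\<forall>t\<ge>0. ereal t \<ge> alpha_time (opc X) (Some ` topspace X) w \<longrightarrow> w t = None"
              by (rule w_absorb)
            show ?thesis
            proof (rule that[of s T2])
              show "0 \<le> s" "s < T2" "T2 \<le> T2" using s TT2 by auto
              fix r assume r: "r \<in> {s..T2}"
              have "w r = None" using abs al r sp unfolding Y_def
                by (metis atLeastAtMost_iff ereal_less_eq(3) order_trans less_imp_le)
              moreover have "w r \<in> topspace Y" using wtop r sp by auto
              ultimately show "w r \<in> topspace Y - Some ` \<Omega>" by auto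
            qed
          next
            case (Some x)
            have xt: "x \<in> topspace X" using ws Some topspace_opc[of X] unfolding Y_def by auto
            have "x \<notin> X closure_of \<Omega>" using nin Some by auto
            then obtain U where U: "x \<in> U" "openin X U" "U \<inter> \<Omega> = {}"
              using xt unfolding in_closure_of by blast
            have cw: "continuous_map (subtopology euclideanreal {0..}) Y w"
              using wp unfolding path_space_def by simp
            have "openin (subtopology euclideanreal {0..}) {r \<in> topspace (subtopology euclideanreal {0..}). w r \<in> Some ` U}"
              using openin_continuous_map_preimage[OF cw] openin_opc_Some[OF U(2)] unfolding Y_def by blast
            then obtain G where G: "open G" "{r \<in> {0..}. w r \<in> Some ` U} = G \<inter> {0..}"
              unfolding openin_subtopology by auto
            have "s \<in> G" using G(2) s Some U(1) by auto
            then obtain e where e: "e > 0" "\<And>y. dist y s < e \<Longrightarrow> y \<in> G"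
              using G(1) unfolding open_dist by blast
            define b where "b = s + min (e/2) (T2 - s)"
            show ?thesis
            proof (rule that[of s b])
              show "0 \<le> s" "s < b" "b \<le> T2" using s TT2 e by (auto simp: b_def)
              fix r assume r: "r \<in> {s..b}"
              have "dist r s < e" using r e by (auto simp: b_def dist_real_def)
              then have "r \<in> G" by (rule e(2))
              then have "w r \<in> Some ` U" using G(2) r s by auto
              moreover have "Some ` U \<subseteq> topspace Y"
                using openin_subset[OF openin_opc_Some[OF U(2)]] unfolding Y_def .
              ultimately show "w r \<in> topspace Y - Some ` \<Omega>" using U(3) by auto
            qed
          qed
          have "integral {0..T2} ?f > 0" by (rule pos_integral[OF wp Oopen ab out])
          then show False using I0 by simp
        qed
        have sub: "w ` {0..T} \<subseteq> (\<Union>n. Some ` U' n)"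
          using incl clU by blast
        obtain N where N: "w ` {0..T} \<subseteq> Some ` U' N"
          using compact_incr_cover[OF path_compact[OF wp] openin_opc_Some[OF U'open, folded Y_def] image_mono[OF U'mono] sub]
          by blast
        have "ereal T \<le> beta_time Y (Some ` \<Omega>s N) w"
        proof (rule beta_ge)
          fix t assume t: "t > 0" "integral {0..t} (\<lambda>s. indicator (topspace Y - Some ` \<Omega>s N) (w s) :: real) > 0"
          show "T \<le> t"
          proof (rule ccontr)
            assume "\<not> T \<le> t"
            then have tT: "t < T" by simp
            have "integral {0..t} (\<lambda>s. indicator (topspace Y - Some ` \<Omega>s N) (w s) :: real) \<le> integral {0..t} ?f"
            proof (rule integral_le[OF path_integrable[OF wp Vopen] path_integrable[OF wp Oopen]])
              fix r assume r: "r \<in> {0..t}"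
              then have "w r \<in> Some ` U' N" using N tT by auto
              then show "indicator (topspace Y - Some ` \<Omega>s N) (w r) \<le> ?f r"
                using U'int[of N] by (auto simp: indicator_def)
            qed
            also have "\<dots> \<le> integral {0..T2} ?f"
              using tT TT2 t(1)
              by (intro integral_subset_le path_integrable[OF wp Oopen]) (auto simp: indicator_def)
            finally show False using I0 t(2) by simp
          qed
        qed
        then show ?thesis by blast
      qed
    qed
    show ?thesis using incB lim by blast
  qed
  show ?thesis
    apply (intro conjI)
      apply (rule incA[unfolded Y_def])
     apply (rule A[unfolded Y_def])
    apply (intro impI, elim exE conjE)
    apply (rule B[unfolded Y_def])
     apply assumption+
    done
qed


end
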